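(* Consider the network $N$ described in the context, with $3f < n \le 5f$. Let $X \in (A,B)$. Suppose the robots run any deterministic cautious algorithm. - If all Byzantine robots are located in $[A,X]$, then whenever the robots of $SetA$ are activated, their computed destinations lie in $[A,X]$. - Symmetrically, if all Byzantine robots are located in $[X,B]$, then whenever the robots of $SetB$ are activated, their computed destinations lie in $[X,B]$.
   Context: Model: robots on the real line in the ATOM model (each activated robot performs a full Look–Compute–Move cycle atomically). Robots are anonymous (same deterministic program), oblivious, have no common orientation, and have unlimited visibility with strong multiplicity detection (an observation is the multiset of all positions). Byzantine robots behave arbitrarily, with positions chosen by the adversary. Network $N$: there are $n$ robots, exactly $f$ of which are Byzantine, and $A<B$ are two points. - $SetA$: $f$ correct robots located at $A$. - $SetB$: $f$ correct robots located at $B$. - $SetX$: the remaining $n-3f$ correct robots, all at a common point $X \in (A,B)$. Cautious algorithm: for every time $t$ and every correct robot $i$, the last computed destination $D_i(t)$ lies in $[\min U^i(t), \max U^i(t)]$, where $U^i(t)$ is the multiset of positions of the correct robots in robot $i$'s last observation. In addition, whenever the correct robots are not all colocated, some correct robot later has a destination different from its position. *)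

theory Defs
  imports Complex_Main "HOL-Library.Multiset"
begin

text \<open>A deterministic algorithm, executed in the robot's local coordinate system:
  it maps the observed multiset of positions (all n robots, strong multiplicity
  detection) and the robot's own position to a destination.\<close>
type_synonym algorithm = "real multiset \<Rightarrow> real \<Rightarrow> real"

text \<open>A local frame (a, b) with a \<noteq> 0: local coordinate of x is a*x+b
  (no common orientation, origin or unit).\<close>
definition valid_frame :: "real \<times> real \<Rightarrow> bool" where
  "valid_frame fr \<longleftrightarrow> fst fr \<noteq> 0"

definition to_local :: "real \<times> real \<Rightarrow> real \<Rightarrow> real" where
  "to_local fr x = fst fr * x + snd fr"

definition to_global :: "real \<times> real \<Rightarrow> real \<Rightarrow> real" where
  "to_global fr y = (y - snd fr) / fst fr"

definition destination :: "algorithm \<Rightarrow> real \<times> real \<Rightarrow> real multiset \<Rightarrow> real \<Rightarrow> real" where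
  "destination alg fr obs p = to_global fr (alg (image_mset (to_local fr) obs) (to_local fr p))"

text \<open>Cautious (safety part): whenever the correct robots occupy C (n-f robots) and the
  f Byzantine robots occupy Z, any correct robot computes a destination in the
  hull of the correct positions, whatever its local frame.\<close>
definition cautious :: "nat \<Rightarrow> nat \<Rightarrow> algorithm \<Rightarrow> bool" where
  "cautious n f alg \<longleftrightarrow>
     (\<forall>C Z p fr. size C = n - f \<and> size Z = f \<and> p \<in># C \<and> valid_frame fr \<longrightarrow>
        destination alg fr (C + Z) p \<in> {Min (set_mset C) .. Max (set_mset C)})"

text \<open>Observation in network N: SetA (f at A), SetB (f at B), SetX (n-3f at X), Byzantine at Z.\<close>
definition network_obs :: "nat \<Rightarrow> nat \<Rightarrow> real \<Rightarrow> real \<Rightarrow> real \<Rightarrow> real multiset \<Rightarrow> real multiset" where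
  "network_obs n f A B X Z =
     replicate_mset f A + replicate_mset f B + replicate_mset (n - 3 * f) X + Z"

end

theory Submission
  imports Defs
begin

lemma hull_sub:
  fixes C :: "real multiset"
  assumes "set_mset C \<subseteq> {a..b}" "C \<noteq> {#}"
  shows "{Min (set_mset C) .. Max (set_mset C)} \<subseteq> {a..b}"
proof -
  have ne: "set_mset C \<noteq> {}" using assms(2) by simp
  have "Min (set_mset C) \<in> set_mset C" "Max (set_mset C) \<in> set_mset C"
    using ne by auto
  then show ?thesis using assms(1) by force
qed

theorem lemma1:
  fixes n f :: nat and A B X :: real and alg :: algorithm
  assumes "3 * f < n" and "n \<le> 5 * f"
    and "A < B" and "A < X" and "X < B"
    and "cautious n f alg"
  shows "(\<forall>Z fr. size Z = f \<and> set_mset Z \<subseteq> {A..X} \<and> valid_frame fr \<longrightarrow>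
            destination alg fr (network_obs n f A B X Z) A \<in> {A..X})
       \<and> (\<forall>Z fr. size Z = f \<and> set_mset Z \<subseteq> {X..B} \<and> valid_frame fr \<longrightarrow>
            destination alg fr (network_obs n f A B X Z) B \<in> {X..B})"
proof (intro conjI allI impI)
  have f0: "f > 0" using assms(1,2) by linarith
  fix Z fr
  assume h: "size Z = f \<and> set_mset Z \<subseteq> {A..X} \<and> valid_frame fr"
  define C where "C = replicate_mset f A + replicate_mset (n - 3 * f) X + Z"
  have sz: "size C = n - f" using h assms(1) by (simp add: C_def)
  have pin: "A \<in># C" using f0 by (simp add: C_def)
  have obs: "network_obs n f A B X Z = C + replicate_mset f B"
    by (simp add: network_obs_def C_def add_ac)
  have d: "destination alg fr (C + replicate_mset f B) A \<in> {Min (set_mset C) .. Max (set_mset C)}"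
    using assms(6) sz pin h unfolding cautious_def by (metis size_replicate_mset)
  have sub: "set_mset C \<subseteq> {A..X}" using h assms(4) by (auto simp: C_def)
  have "C \<noteq> {#}" using pin by auto
  then show "destination alg fr (network_obs n f A B X Z) A \<in> {A..X}"
    using d hull_sub[OF sub] obs by (metis subsetD)
next
  have f0: "f > 0" using assms(1,2) by linarith
  fix Z fr
  assume h: "size Z = f \<and> set_mset Z \<subseteq> {X..B} \<and> valid_frame fr"
  define C where "C = replicate_mset f B + replicate_mset (n - 3 * f) X + Z"
  have sz: "size C = n - f" using h assms(1) by (simp add: C_def)
  have pin: "B \<in># C" using f0 by (simp add: C_def)
  have obs: "network_obs n f A B X Z = C + replicate_mset f A"
    by (simp add: network_obs_def C_def add_ac)
  have d: "destination alg fr (C + replicate_mset f A) B \<in> {Min (set_mset C) .. Max (set_mset C)}"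
    using assms(6) sz pin h unfolding cautious_def by (metis size_replicate_mset)
  have sub: "set_mset C \<subseteq> {X..B}" using h assms(5) by (auto simp: C_def)
  have "C \<noteq> {#}" using pin by auto
  then show "destination alg fr (network_obs n f A B X Z) B \<in> {X..B}"
    using d hull_sub[OF sub] obs by (metis subsetD)
qed

end
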